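(* Suppose that for some constants $0<a<b$, for all agents $i$, all $t\ge t_0$ and all $k\in\{1,\dots,K\}$, the iterates satisfy $aI_p\preceq\Gamma_{i,t}^k\preceq bI_p$, and $aI_p\preceq\Gamma^*\preceq bI_p$. Then at the $k$-th iteration of time step $t>t_0$, $$\|\Gamma_{i,t}^k-\Gamma^*\|_F\le \beta_{i,t}^{k-1}\|\Gamma_{i,t}^{k-1}-\Gamma^*\|_F+2\|S_{i,t}^W-S^*\|_F,$$ where $\beta_{i,t}^{k-1}=\max\{|1-\zeta_{i,t}^{k-1}/a^2|,\;|1-\zeta_{i,t}^{k-1}/b^2|\}$.
   Context: $S^*\in\mathbb R^{p\times p}$ is a positive definite (true) covariance matrix. For $\lambda>0$, let $\Omega^*$ be the minimizer over positive definite $p\times p$ matrices $\Omega$ of $-\log\det\Omega+\mathrm{tr}(S^*\Omega)+\lambda\sum_{i,j}|\Omega(i,j)|$, and $\Gamma^*=(\Omega^* )^{-1}$. Let $\mathcal C_\lambda(x)=\min(\max(x,-\lambda),\lambda)$ applied entrywise. There are $n$ agents; for each agent $i$ and time step $t$, $S_{i,t}^W$ is a symmetric $p\times p$ matrix (agent $i$'s estimate of the sample covariance at time $t$, produced by a distributed communication protocol). Given $t_0\in\mathbb N$ and $K\in\mathbb N$: $\Gamma_{i,t_0}^K=S_{i,t_0}^W+\lambda I_p$; for $t>t_0$, $\Gamma_{i,t}^0=\Gamma_{i,t-1}^K$ and for $k=1,\dots,K$, $\Gamma_{i,t}^k=\mathcal C_\lambda\big(\Gamma_{i,t}^{k-1}-S_{i,t}^W+\zeta_{i,t}^{k-1}(\Gamma_{i,t}^{k-1})^{-1}\big)+S_{i,t}^W$,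 with step sizes $\zeta_{i,t}^{k-1}>0$. $\|\cdot\|_F$ is the Frobenius norm. *)

theory Defs
  imports "HOL-Analysis.Analysis"
begin

definition sym_mat :: "real^'p^'p \<Rightarrow> bool" where
  "sym_mat A \<longleftrightarrow> transpose A = A"

definition pos_def :: "real^'p^'p \<Rightarrow> bool" where
  "pos_def A \<longleftrightarrow> sym_mat A \<and> (\<forall>x. x \<noteq> 0 \<longrightarrow> x \<bullet> (A *v x) > 0)"

definition pos_semidef :: "real^'p^'p \<Rightarrow> bool" where
  "pos_semidef A \<longleftrightarrow> sym_mat A \<and> (\<forall>x. x \<bullet> (A *v x) \<ge> 0)"

definition loewner_le :: "real^'p^'p \<Rightarrow> real^'p^'p \<Rightarrow> bool" where
  "loewner_le A B \<longleftrightarrow> pos_semidef (B - A)"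

definition frob_norm :: "real^'p^'p \<Rightarrow> real" where
  "frob_norm A = sqrt (\<Sum>i\<in>UNIV. \<Sum>j\<in>UNIV. (A $ i $ j)^2)"

definition clip :: "real \<Rightarrow> real^'p^'p \<Rightarrow> real^'p^'p" where
  "clip lam A = (\<chi> i j. min (max (A $ i $ j) (- lam)) lam)"

definition glasso_obj :: "real^'p^'p \<Rightarrow> real \<Rightarrow> real^'p^'p \<Rightarrow> real" where
  "glasso_obj S lam \<Omega> = - ln (det \<Omega>) + trace (S ** \<Omega>) + lam * (\<Sum>i\<in>UNIV. \<Sum>j\<in>UNIV. \<bar>\<Omega> $ i $ j\<bar>)"

end

theory Submission
  imports Defs
begin



lemma frob_norm_eq: "frob_norm A = norm A"
  unfolding frob_norm_def norm_vec_def L2_set_def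
  by (simp add: real_sqrt_pow2 sum_nonneg power2_eq_square[symmetric] real_norm_def)

lemma psd_cs:
  fixes T :: "'a::real_inner \<Rightarrow> 'a"
  assumes lin: "linear T" and sa: "\<And>x y. T x \<bullet> y = x \<bullet> T y" and psd: "\<And>x. T x \<bullet> x \<ge> 0"
  shows "(T x \<bullet> y)^2 \<le> (T x \<bullet> x) * (T y \<bullet> y)"
proof -
  have q: "0 \<le> T x \<bullet> x + 2 * s * (T x \<bullet> y) + s^2 * (T y \<bullet> y)" for s
  proof -
    have "0 \<le> T (x + s *\<^sub>R y) \<bullet> (x + s *\<^sub>R y)" by (rule psd)
    also have "\<dots> = T x \<bullet> x + s * (T x \<bullet> y) + s * (T y \<bullet> x) + s^2 * (T y \<bullet> y)"
      using lin by (simp add: linear_add linear_scale inner_add_left inner_add_right power2_eq_square algebra_simps)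
    also have "T y \<bullet> x = T x \<bullet> y" using sa[of y x] by (simp add: inner_commute)
    finally show ?thesis by simp
  qed
  show ?thesis
  proof (cases "T y \<bullet> y = 0")
    case True
    have "T x \<bullet> y = 0"
    proof (rule ccontr)
      assume ne: "T x \<bullet> y \<noteq> 0"
      let ?s = "- (T x \<bullet> x + 1) / (2 * (T x \<bullet> y))"
      have "0 \<le> T x \<bullet> x + 2 * ?s * (T x \<bullet> y)" using q[of ?s] True by simp
      also have "\<dots> = -1" using ne by (simp add: field_simps)
      finally show False by simp
    qed
    then show ?thesis using True by simp
  next
    case False
    then have pos: "T y \<bullet> y > 0" using psd[of y] by simp
    let ?s = "- (T x \<bullet> y) / (T y \<bullet> y)"
    have "0 \<le> T x \<bullet> x + 2 * ?s * (T x \<bullet> y) + ?s^2 * (T y \<bullet> y)" by (rule q)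
    also have "\<dots> = T x \<bullet> x - (T x \<bullet> y)^2 / (T y \<bullet> y)"
      using pos by (simp add: field_simps power2_eq_square)
    finally have "(T x \<bullet> y)^2 / (T y \<bullet> y) \<le> T x \<bullet> x" by simp
    then show ?thesis using pos by (simp add: pos_divide_le_eq mult.commute)
  qed
qed

lemma psd_sq:
  fixes T :: "'a::real_inner \<Rightarrow> 'a"
  assumes lin: "linear T" and sa: "\<And>x y. T x \<bullet> y = x \<bullet> T y" and psd: "\<And>x. T x \<bullet> x \<ge> 0"
    and up: "\<And>x. T x \<bullet> x \<le> M * (x \<bullet> x)" and M0: "M \<ge> 0"
  shows "T x \<bullet> T x \<le> M * (T x \<bullet> x)"
proof -
  have "(T x \<bullet> T x)^2 \<le> (T x \<bullet> x) * (T (T x) \<bullet> T x)" by (rule psd_cs[OF lin sa psd])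
  also have "\<dots> \<le> (T x \<bullet> x) * (M * (T x \<bullet> T x))" by (rule mult_left_mono[OF up psd])
  finally have h: "(T x \<bullet> T x)^2 \<le> (M * (T x \<bullet> x)) * (T x \<bullet> T x)" by (simp add: ac_simps)
  show ?thesis
  proof (cases "T x \<bullet> T x = 0")
    case True then show ?thesis
      using True M0 psd[of x] by simp
  next
    case False
    then have "T x \<bullet> T x > 0" by (simp add: order_less_le)
    with h show ?thesis by (simp add: power2_eq_square)
  qed
qed

lemma contraction:
  fixes T :: "'a::real_inner \<Rightarrow> 'a"
  assumes lin: "linear T" and sa: "\<And>x y. T x \<bullet> y = x \<bullet> T y"
    and lo: "\<And>x. m * (x \<bullet> x) \<le> T x \<bullet> x" and up: "\<And>x. T x \<bullet> x \<le> M * (x \<bullet> x)"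
    and mM: "m \<le> M"
  shows "norm (x - z *\<^sub>R T x) \<le> max \<bar>1 - z * M\<bar> \<bar>1 - z * m\<bar> * norm x"
proof -
  define S where "S = (\<lambda>x. T x - m *\<^sub>R x)"
  have linS: "linear S" unfolding S_def using lin by (auto simp: linear_iff algebra_simps)
  have saS: "S x \<bullet> y = x \<bullet> S y" for x y unfolding S_def using sa[of x y] by (simp add: inner_diff_left inner_diff_right inner_commute)
  have psdS: "S x \<bullet> x \<ge> 0" for x unfolding S_def using lo[of x] by (simp add: inner_diff_left)
  have upS: "S x \<bullet> x \<le> (M - m) * (x \<bullet> x)" for x unfolding S_def using up[of x] by (simp add: inner_diff_left algebra_simps)
  have sq: "S x \<bullet> S x \<le> (M - m) * (S x \<bullet> x)" by (rule psd_sq[OF linS saS psdS upS]) (use mM in simp)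
  define u where "u = T x \<bullet> x"
  define w where "w = T x \<bullet> T x"
  define n where "n = x \<bullet> x"
  have txx: "x \<bullet> T x = u" unfolding u_def by (simp add: inner_commute)
  have e1: "S x \<bullet> S x = w - 2 * m * u + m^2 * n" unfolding S_def w_def u_def n_def
    by (simp add: inner_diff_left inner_diff_right inner_commute power2_eq_square algebra_simps)
  have e2: "S x \<bullet> x = u - m * n" unfolding S_def u_def n_def by (simp add: inner_diff_left)
  have "w - 2 * m * u + m^2 * n \<le> (M - m) * (u - m * n)" using sq unfolding e1 e2 .
  then have wle: "w \<le> (M + m) * u - M * m * n" by (simp add: algebra_simps power2_eq_square)
  have nx: "norm (x - z *\<^sub>R T x)^2 = n - 2 * z * u + z^2 * w"
    unfolding power2_norm_eq_inner n_def u_def w_def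
    by (simp add: inner_diff_left inner_diff_right inner_commute power2_eq_square algebra_simps)
  also have "\<dots> \<le> n - 2 * z * u + z^2 * ((M + m) * u - M * m * n)"
    using wle by (simp add: mult_left_mono)
  also have "\<dots> \<le> max ((1 - z * M)^2) ((1 - z * m)^2) * n"
  proof (cases "- 2 * z + z^2 * (M + m) \<ge> 0")
    case True
    have "u \<le> M * n" using up[of x] unfolding u_def n_def .
    then have "n - 2 * z * u + z^2 * ((M + m) * u - M * m * n) \<le> n - 2 * z * (M*n) + z^2 * ((M + m) * (M*n) - M * m * n)"
      using True mult_left_mono[of u "M*n" "- 2 * z + z^2 * (M + m)"] by (simp add: algebra_simps)
    also have "\<dots> = (1 - z * M)^2 * n" by (simp add: algebra_simps power2_eq_square)
    also have "\<dots> \<le> max ((1 - z * M)^2) ((1 - z * m)^2) * n" unfolding n_def by (intro mult_right_mono) auto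
    finally show ?thesis .
  next
    case False
    have "m * n \<le> u" using lo[of x] unfolding u_def n_def .
    then have "n - 2 * z * u + z^2 * ((M + m) * u - M * m * n) \<le> n - 2 * z * (m*n) + z^2 * ((M + m) * (m*n) - M * m * n)"
      using False mult_left_mono[of "m*n" u "- (- 2 * z + z^2 * (M + m))"] by (simp add: algebra_simps)
    also have "\<dots> = (1 - z * m)^2 * n" by (simp add: algebra_simps power2_eq_square)
    also have "\<dots> \<le> max ((1 - z * M)^2) ((1 - z * m)^2) * n" unfolding n_def by (intro mult_right_mono) auto
    finally show ?thesis .
  qed
  also have "\<dots> = (max \<bar>1 - z * M\<bar> \<bar>1 - z * m\<bar> * norm x)^2"
    unfolding n_def power2_norm_eq_inner[symmetric] power_mult_distrib
    by (simp add: max_def abs_le_square_iff)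
  finally show ?thesis by (rule power2_le_imp_le) simp
qed




lemma mm_diff_l: "(A::real^'n^'n) ** (B - C) = A ** B - A ** C"
  by (simp add: matrix_matrix_mult_def vec_eq_iff sum_subtractf right_diff_distrib)
lemma mm_diff_r: "((A::real^'n^'n) - B) ** C = A ** C - B ** C"
  by (simp add: matrix_matrix_mult_def vec_eq_iff sum_subtractf left_diff_distrib)
lemma mm_add_l: "(A::real^'n^'n) ** (B + C) = A ** B + A ** C"
  by (simp add: matrix_matrix_mult_def vec_eq_iff sum.distrib distrib_left)
lemma mm_add_r: "((A::real^'n^'n) + B) ** C = A ** C + B ** C"
  by (simp add: matrix_matrix_mult_def vec_eq_iff sum.distrib distrib_right)
lemma mm_scale_l: "((k::real) *\<^sub>R (A::real^'n^'n)) ** B = k *\<^sub>R (A ** B)"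
  by (simp add: matrix_matrix_mult_def vec_eq_iff sum_distrib_left mult.assoc)
lemma mm_scale_r: "(A::real^'n^'n) ** ((k::real) *\<^sub>R B) = k *\<^sub>R (A ** B)"
  by (simp add: matrix_matrix_mult_def vec_eq_iff sum_distrib_left mult.left_commute)

lemma mat1_mv: "((a::real) *\<^sub>R mat 1) *v (x::real^'n) = a *\<^sub>R x"
  by (metis scaleR_matrix_vector_assoc matrix_vector_mul_lid)

lemma mat1_mm: "((a::real) *\<^sub>R mat 1) ** (A::real^'n^'n) = a *\<^sub>R A"
  by (simp add: mm_scale_l)

lemma sym_sa: "sym_mat (G::real^'n^'n) \<Longrightarrow> (G *v x) \<bullet> y = x \<bullet> (G *v y)"
  unfolding sym_mat_def by (metis dot_lmul_matrix vector_transpose_matrix)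

lemma transpose_diff': "transpose ((A::real^'n^'n) - B) = transpose A - transpose B"
  by (simp add: transpose_def vec_eq_iff)

lemma sym_diff_scal: "sym_mat ((A::real^'n^'n) - a *\<^sub>R mat 1) \<longleftrightarrow> sym_mat A"
  unfolding sym_mat_def by (simp add: transpose_diff' transpose_scalar)
lemma sym_scal_diff: "sym_mat (a *\<^sub>R mat 1 - (A::real^'n^'n)) \<longleftrightarrow> sym_mat A"
  unfolding sym_mat_def by (simp add: transpose_diff' transpose_scalar)

lemma loewner_lower:
  assumes "loewner_le (a *\<^sub>R mat 1) (G::real^'n^'n)"
  shows "sym_mat G" "a * (x \<bullet> x) \<le> x \<bullet> (G *v x)"
  using assms unfolding loewner_le_def pos_semidef_def
  by (auto simp: sym_diff_scal matrix_vector_mult_diff_rdistrib mat1_mv inner_diff_right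
       dest: spec[where x=x])

lemma loewner_upper:
  assumes "loewner_le (G::real^'n^'n) (b *\<^sub>R mat 1)"
  shows "sym_mat G" "x \<bullet> (G *v x) \<le> b * (x \<bullet> x)"
  using assms unfolding loewner_le_def pos_semidef_def
  by (auto simp: sym_scal_diff matrix_vector_mult_diff_rdistrib mat1_mv inner_diff_right
       dest: spec[where x=x])

lemma invertible_inv:
  assumes "invertible (G::real^'n^'n)"
  shows "G ** matrix_inv G = mat 1" "matrix_inv G ** G = mat 1"
proof -
  have "\<exists>A'. G ** A' = mat 1 \<and> A' ** G = mat 1" using assms unfolding invertible_def by blast
  from someI_ex[OF this] show "G ** matrix_inv G = mat 1" "matrix_inv G ** G = mat 1"
    unfolding matrix_inv_def by auto
qed

lemma inv_unique:
  assumes "(G::real^'n^'n) ** P = mat 1" "P' ** G = mat 1" shows "P' = P"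
proof -
  have "P' = P' ** (G ** P)" using assms by simp
  also have "\<dots> = (P' ** G) ** P" by (simp add: matrix_mul_assoc)
  finally show ?thesis using assms by simp
qed

lemma inv_bounds:
  fixes G :: "real^'n^'n"
  assumes sym: "sym_mat G" and a: "a > 0" and lo: "\<And>x. a * (x \<bullet> x) \<le> x \<bullet> (G *v x)"
    and up: "\<And>x. x \<bullet> (G *v x) \<le> b * (x \<bullet> x)"
  shows "invertible G" "G ** matrix_inv G = mat 1" "matrix_inv G ** G = mat 1"
    "sym_mat (matrix_inv G)"
    "(1/b) * (x \<bullet> x) \<le> x \<bullet> (matrix_inv G *v x)"
    "x \<bullet> (matrix_inv G *v x) \<le> (1/a) * (x \<bullet> x)"
proof -
  have inj: "G *v y = 0 \<Longrightarrow> y = 0" for y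
  proof -
    assume "G *v y = 0"
    then have "a * (y \<bullet> y) \<le> 0" using lo[of y] by simp
    then have "y \<bullet> y \<le> 0" using a by (simp add: mult_le_0_iff)
    then show "y = 0" using inner_ge_zero[of y] by (metis inner_eq_zero_iff order_antisym)
  qed
  show inv: "invertible G" unfolding invertible_left_inverse matrix_left_invertible_ker using inj by blast
  note I = invertible_inv[OF inv]
  show "G ** matrix_inv G = mat 1" "matrix_inv G ** G = mat 1" using I by auto
  define P where "P = matrix_inv G"
  have "transpose P ** G = mat 1"
    using I(1) sym unfolding P_def sym_mat_def by (metis matrix_transpose_mul transpose_mat)
  then have "transpose P = P" using inv_unique[OF I(1)] unfolding P_def by blast
  then show "sym_mat (matrix_inv G)" unfolding sym_mat_def P_def .
  define y where "y = P *v x"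
  have xy: "G *v y = x" unfolding y_def P_def by (simp add: matrix_vector_mul_assoc I)
  define u where "u = x \<bullet> (P *v x)"
  have u: "u = (G *v y) \<bullet> y" unfolding u_def y_def[symmetric] xy ..
  have "a * 1 \<le> b * 1" using lo[of "axis undefined 1"] up[of "axis undefined 1"]
    by (simp only: inner_axis_axis) simp
  then have bpos: "b > 0" using a by simp
  then have b0: "b \<ge> 0" by simp
  have saG: "\<And>x y. (G *v x) \<bullet> y = x \<bullet> (G *v y)" by (rule sym_sa[OF sym])
  have psdG: "(G *v x) \<bullet> x \<ge> 0" for x
  proof -
    have "0 \<le> a * (x \<bullet> x)" using a by simp
    also have "\<dots> \<le> (G *v x) \<bullet> x" using lo[of x] by (simp add: inner_commute)
    finally show ?thesis .
  qed
  have upG: "\<And>x. (G *v x) \<bullet> x \<le> b * (x \<bullet> x)" using up by (simp add: inner_commute)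
  have "(G *v y) \<bullet> (G *v y) \<le> b * ((G *v y) \<bullet> y)"
    by (rule psd_sq[OF matrix_vector_mul_linear saG psdG upG b0])
  then have "x \<bullet> x \<le> b * u" using xy u by simp
  with bpos show "(1/b) * (x \<bullet> x) \<le> x \<bullet> (matrix_inv G *v x)"
    unfolding u_def[symmetric] P_def[symmetric] using pos_divide_le_eq[OF bpos, of "x \<bullet> x" u]
    by (simp add: mult.commute)
  have u0: "u \<ge> 0" using psdG[of y] u by simp
  have ay: "a * (y \<bullet> y) \<le> u" using lo[of y] u by (simp add: inner_commute)
  have "u^2 = (x \<bullet> y)^2" unfolding u_def y_def by simp
  also have "\<dots> \<le> (x \<bullet> x) * (y \<bullet> y)"
    by (metis Cauchy_Schwarz_ineq)
  also have "\<dots> \<le> (x \<bullet> x) * (u / a)"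
    using ay pos_le_divide_eq[OF a, of "y \<bullet> y" u] by (intro mult_left_mono) (auto simp: mult.commute)
  finally have uu: "u * u \<le> ((x \<bullet> x) / a) * u" by (simp add: power2_eq_square)
  have "u \<le> (x \<bullet> x) / a"
  proof (cases "u = 0")
    case True then show ?thesis using a by simp
  next
    case False then have "u > 0" using u0 by simp
    then show ?thesis using uu by (metis mult_right_le_imp_le)
  qed
  then have "u \<le> (1/a) * (x \<bullet> x)" by simp
  then show "x \<bullet> (matrix_inv G *v x) \<le> (1/a) * (x \<bullet> x)" unfolding u_def P_def .
qed




definition outer :: "real^'n \<Rightarrow> real^'n^'n" where "outer c = (\<chi> i j. c$i * c$j)"

lemma outer_mv: "outer c *v x = (c \<bullet> x) *\<^sub>R c"
  by (simp add: outer_def matrix_vector_mult_def inner_vec_def vec_eq_iff sum_distrib_left mult_ac)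

lemma outer_sym: "sym_mat (outer c)"
  by (simp add: sym_mat_def outer_def transpose_def vec_eq_iff mult.commute)

lemma subspace_ker: "subspace {x. (Q::real^'n^'n) *v x = 0}"
  unfolding subspace_def by (auto simp: matrix_vector_right_distrib matrix_vector_mult_scaleR)

lemma psd_factor_aux:
  "\<forall>Q::real^'n^'n. CARD('n) - dim {x. Q *v x = 0} = k \<longrightarrow> sym_mat Q \<longrightarrow> (\<forall>x. 0 \<le> x \<bullet> (Q *v x))
     \<longrightarrow> (\<exists>cs. Q = sum_list (map outer cs))"
proof (induction k rule: less_induct)
  case (less k)
  show ?case
  proof (intro allI impI)
    fix Q :: "real^'n^'n"
    assume k: "CARD('n) - dim {x. Q *v x = 0} = k" and sym: "sym_mat Q" and psd: "\<forall>x. 0 \<le> x \<bullet> (Q *v x)"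
    show "\<exists>cs. Q = sum_list (map outer cs)"
    proof (cases "\<forall>x. Q *v x = 0")
      case True
      then have "Q = 0" by (simp add: matrix_eq)
      then show ?thesis by (intro exI[of _ "[]"]) simp
    next
      case False
      then obtain v where v: "Q *v v \<noteq> 0" by blast
      have saQ: "\<And>x y. (Q *v x) \<bullet> y = x \<bullet> (Q *v y)" by (rule sym_sa[OF sym])
      have psdQ: "\<And>x. (Q *v x) \<bullet> x \<ge> 0" using psd by (simp add: inner_commute)
      note CS = psd_cs[OF matrix_vector_mul_linear saQ psdQ]
      define s where "s = (Q *v v) \<bullet> v"
      have s0: "s \<ge> 0" unfolding s_def by (rule psdQ)
      have spos: "s > 0"
      proof (rule ccontr)
        assume "\<not> s > 0"
        then have "s = 0" using s0 by simp
        then have "((Q *v v) \<bullet> (Q *v v))^2 \<le> 0" using CS[of v "Q *v v"] unfolding s_def by simp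
        then have "(Q *v v) \<bullet> (Q *v v) = 0" by simp
        then show False using v by simp
      qed
      define c where "c = (1 / sqrt s) *\<^sub>R (Q *v v)"
      define Q' where "Q' = Q - outer c"
      have cx: "(c \<bullet> x)^2 = ((Q *v v) \<bullet> x)^2 / s" for x
        unfolding c_def using spos by (simp add: power_mult_distrib power_divide)
      have Q'x: "Q' *v x = Q *v x - (c \<bullet> x) *\<^sub>R c" for x
        unfolding Q'_def by (simp add: matrix_vector_mult_diff_rdistrib outer_mv)
      have symQ': "sym_mat Q'" using sym outer_sym unfolding Q'_def sym_mat_def by (simp add: transpose_diff')
      have psdQ': "\<forall>x. 0 \<le> x \<bullet> (Q' *v x)"
      proof
        fix x
        have "((Q *v v) \<bullet> x)^2 \<le> s * ((Q *v x) \<bullet> x)" using CS[of v x] unfolding s_def .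
        then have h1: "((Q *v v) \<bullet> x)^2 / s \<le> (Q *v x) \<bullet> x" using pos_divide_le_eq[OF spos] by (metis mult.commute)
        have h2: "(c \<bullet> x)^2 \<le> (Q *v x) \<bullet> x" using h1 cx[of x] by linarith
        have "x \<bullet> (Q' *v x) = (Q *v x) \<bullet> x - (c \<bullet> x)^2" unfolding Q'x by (simp add: inner_diff_right power2_eq_square inner_commute)
        then show "0 \<le> x \<bullet> (Q' *v x)" using h2 by linarith
      qed
      have sub: "{x. Q *v x = 0} \<subseteq> {x. Q' *v x = 0}"
      proof
        fix x assume "x \<in> {x. Q *v x = 0}"
        then have qx: "Q *v x = 0" by simp
        have "c \<bullet> x = (1 / sqrt s) * (v \<bullet> (Q *v x))" unfolding c_def by (simp add: saQ)
        then have "c \<bullet> x = 0" using qx by simp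
        then show "x \<in> {x. Q' *v x = 0}" using qx by (simp add: Q'x)
      qed
      have vin: "Q' *v v = 0"
      proof -
        have "(c \<bullet> v) *\<^sub>R c = ((1 / sqrt s) * (1 / sqrt s) * s) *\<^sub>R (Q *v v)"
          unfolding c_def s_def by (simp add: inner_commute)
        also have "(1 / sqrt s) * (1 / sqrt s) * s = 1" using spos
          by (simp add: field_simps)
        finally show ?thesis by (simp add: Q'x)
      qed
      have psub: "{x. Q *v x = 0} \<subset> {x. Q' *v x = 0}" using sub vin v by auto
      have "dim {x. Q *v x = 0} < dim {x. Q' *v x = 0}"
        by (rule dim_psubset) (simp add: span_eq_iff[THEN iffD2, OF subspace_ker] psub)
      moreover have "dim {x. Q' *v x = 0} \<le> CARD('n)" by (rule dim_subset_UNIV_cart)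
      ultimately have lt: "CARD('n) - dim {x. Q' *v x = 0} < k" using k by linarith
      obtain cs where cs: "Q' = sum_list (map outer cs)"
        using less.IH[OF lt] symQ' psdQ' by blast
      have "Q = outer c + Q'" unfolding Q'_def by simp
      then have "Q = sum_list (map outer (c # cs))" using cs by simp
      then show ?thesis by blast
    qed
  qed
qed

lemma psd_factor:
  fixes Q :: "real^'n^'n"
  assumes "sym_mat Q" "\<And>x. 0 \<le> x \<bullet> (Q *v x)"
  shows "\<exists>cs. Q = sum_list (map outer cs)"
  using psd_factor_aux assms by blast

lemma outer_form:
  fixes P D :: "real^'n^'n"
  shows "((P ** D) ** outer c) \<bullet> D = (P *v (D *v c)) \<bullet> (D *v c)"
proof -
  have e1: "D ** outer c = (\<chi> i j. (D *v c)$i * c$j)"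
    by (simp add: vec_eq_iff outer_def matrix_matrix_mult_def matrix_vector_mult_def
        sum_distrib_left mult_ac)
  have e2: "P ** (\<chi> i j. u$i * c$j) = (\<chi> i j. (P *v u)$i * c$j)" for u :: "real^'n"
    by (simp add: vec_eq_iff matrix_matrix_mult_def matrix_vector_mult_def
        sum_distrib_left mult_ac)
  have e: "(P ** D) ** outer c = (\<chi> i j. (P *v (D *v c))$i * c$j)"
    by (simp add: matrix_mul_assoc[symmetric] e1 e2)
  have g: "(\<chi> i j. w$i * c$j) \<bullet> D = w \<bullet> (D *v c)" for w :: "real^'n"
    by (simp add: inner_vec_def matrix_vector_mult_def sum_distrib_left mult_ac)
  show ?thesis unfolding e g ..
qed

lemma L1:
  fixes P Q D :: "real^'n^'n"
  assumes "sym_mat Q" "\<And>x. 0 \<le> x \<bullet> (Q *v x)" "\<And>x. 0 \<le> x \<bullet> (P *v x)"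
  shows "0 \<le> ((P ** D) ** Q) \<bullet> D"
proof -
  obtain cs where Q: "Q = sum_list (map outer cs)" using psd_factor assms by blast
  have "0 \<le> ((P ** D) ** sum_list (map outer cs)) \<bullet> D"
  proof (induction cs)
    case Nil
    have "(P ** D) ** (0::real^'n^'n) = 0" by (simp add: matrix_matrix_mult_def vec_eq_iff)
    then show ?case by simp
  next
    case (Cons c cs)
    have "((P ** D) ** sum_list (map outer (c # cs))) \<bullet> D
        = (P *v (D *v c)) \<bullet> (D *v c) + ((P ** D) ** sum_list (map outer cs)) \<bullet> D"
      by (simp add: mm_add_l inner_add_left outer_form)
    also have "\<dots> \<ge> 0" using Cons assms(3)[of "D *v c"] by (simp add: inner_commute)
    finally show ?case .
  qed
  then show ?thesis using Q by simp
qed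




lemma inner_trace: "(A::real^'n^'n) \<bullet> B = trace (transpose A ** B)"
  by (simp add: inner_vec_def trace_def matrix_matrix_mult_def transpose_def) (rule sum.swap)

lemma form_linear: "linear (\<lambda>D::real^'n^'n. ((P::real^'n^'n) ** D) ** (Q::real^'n^'n))"
  by (rule linearI) (simp_all add: mm_add_l mm_add_r mm_scale_l mm_scale_r)

lemma form_sa:
  fixes P Q D E :: "real^'n^'n"
  assumes "sym_mat P" "sym_mat Q"
  shows "((P ** D) ** Q) \<bullet> E = D \<bullet> ((P ** E) ** Q)"
proof -
  have tP: "transpose P = P" and tQ: "transpose Q = Q" using assms unfolding sym_mat_def by auto
  have "((P ** D) ** Q) \<bullet> E = trace ((Q ** (transpose D ** P)) ** E)"
    unfolding inner_trace by (simp add: matrix_transpose_mul tP tQ)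
  also have "\<dots> = trace (Q ** ((transpose D ** P) ** E))" by (simp add: matrix_mul_assoc)
  also have "\<dots> = trace (((transpose D ** P) ** E) ** Q)" by (rule trace_mul_sym)
  also have "\<dots> = trace (transpose D ** ((P ** E) ** Q))" by (simp add: matrix_mul_assoc)
  also have "\<dots> = D \<bullet> ((P ** E) ** Q)" unfolding inner_trace ..
  finally show ?thesis .
qed

lemma sym_mat1: "sym_mat ((p::real) *\<^sub>R mat 1 :: real^'n^'n)"
  by (simp add: sym_mat_def transpose_scalar)

lemma sym_diff: "sym_mat (A::real^'n^'n) \<Longrightarrow> sym_mat B \<Longrightarrow> sym_mat (A - B)"
  by (simp add: sym_mat_def transpose_diff')

lemma form_lower:
  fixes P Q D :: "real^'n^'n"
  assumes sP: "sym_mat P" and sQ: "sym_mat Q" and p: "p \<ge> 0" and q: "q \<ge> 0"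
    and lP: "\<And>x. p * (x \<bullet> x) \<le> x \<bullet> (P *v x)" and lQ: "\<And>x. q * (x \<bullet> x) \<le> x \<bullet> (Q *v x)"
  shows "p * q * (D \<bullet> D) \<le> ((P ** D) ** Q) \<bullet> D"
proof -
  have psdQ: "0 \<le> x \<bullet> (Q *v x)" for x using lQ[of x] q by (meson inner_ge_zero mult_nonneg_nonneg order_trans)
  have "0 \<le> (((P - p *\<^sub>R mat 1) ** D) ** Q) \<bullet> D"
    by (rule L1[OF sQ psdQ]) (use lP in \<open>simp add: matrix_vector_mult_diff_rdistrib mat1_mv inner_diff_right\<close>)
  then have h1: "p * ((D ** Q) \<bullet> D) \<le> ((P ** D) ** Q) \<bullet> D"
    by (simp add: mm_diff_r mat1_mm mm_scale_l inner_diff_left)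
  have "0 \<le> ((mat 1 ** D) ** (Q - q *\<^sub>R mat 1)) \<bullet> D"
    by (rule L1) (use lQ sQ in \<open>simp_all add: matrix_vector_mult_diff_rdistrib mat1_mv inner_diff_right sym_diff sym_mat1\<close>)
  then have h2: "q * (D \<bullet> D) \<le> (D ** Q) \<bullet> D"
    by (simp add: mm_diff_l mm_scale_r inner_diff_left)
  have "p * q * (D \<bullet> D) \<le> p * ((D ** Q) \<bullet> D)" using mult_left_mono[OF h2 p] by (simp add: mult.assoc)
  then show ?thesis using h1 by linarith
qed

lemma form_upper:
  fixes P Q D :: "real^'n^'n"
  assumes sP: "sym_mat P" and sQ: "sym_mat Q" and p: "p \<ge> 0"
    and psdP: "\<And>x. 0 \<le> x \<bullet> (P *v x)" and psdQ: "\<And>x. 0 \<le> x \<bullet> (Q *v x)"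
    and uP: "\<And>x. x \<bullet> (P *v x) \<le> p * (x \<bullet> x)" and uQ: "\<And>x. x \<bullet> (Q *v x) \<le> q * (x \<bullet> x)"
  shows "((P ** D) ** Q) \<bullet> D \<le> p * q * (D \<bullet> D)"
proof -
  have "0 \<le> (((p *\<^sub>R mat 1 - P) ** D) ** Q) \<bullet> D"
    by (rule L1[OF sQ psdQ]) (use uP in \<open>simp add: matrix_vector_mult_diff_rdistrib mat1_mv inner_diff_right\<close>)
  then have h1: "((P ** D) ** Q) \<bullet> D \<le> p * ((D ** Q) \<bullet> D)"
    by (simp add: mm_diff_r mat1_mm mm_scale_l inner_diff_left)
  have "0 \<le> ((mat 1 ** D) ** (q *\<^sub>R mat 1 - Q)) \<bullet> D"
    by (rule L1) (use uQ sQ in \<open>simp_all add: matrix_vector_mult_diff_rdistrib mat1_mv inner_diff_right sym_scal_diff sym_mat1\<close>)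
  then have h2: "(D ** Q) \<bullet> D \<le> q * (D \<bullet> D)"
    by (simp add: mm_diff_l mm_scale_r inner_diff_left)
  have "p * ((D ** Q) \<bullet> D) \<le> p * q * (D \<bullet> D)" using mult_left_mono[OF h2 p] by (simp add: mult.assoc)
  then show ?thesis using h1 by linarith
qed

lemma mat_contraction:
  fixes P Q D :: "real^'n^'n"
  assumes a: "a > 0" and ab: "a \<le> b" and sP: "sym_mat P" and sQ: "sym_mat Q"
    and lP: "\<And>x. (1/b) * (x \<bullet> x) \<le> x \<bullet> (P *v x)" and lQ: "\<And>x. (1/b) * (x \<bullet> x) \<le> x \<bullet> (Q *v x)"
    and uP: "\<And>x. x \<bullet> (P *v x) \<le> (1/a) * (x \<bullet> x)" and uQ: "\<And>x. x \<bullet> (Q *v x) \<le> (1/a) * (x \<bullet> x)"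
  shows "norm (D - z *\<^sub>R ((P ** D) ** Q)) \<le> max \<bar>1 - z / a^2\<bar> \<bar>1 - z / b^2\<bar> * norm D"
proof -
  have b: "b > 0" using a ab by simp
  have ib: "1/b \<ge> 0" using b by simp
  have psdP: "0 \<le> x \<bullet> (P *v x)" for x using lP[of x] ib by (meson inner_ge_zero mult_nonneg_nonneg order_trans)
  have psdQ: "0 \<le> x \<bullet> (Q *v x)" for x using lQ[of x] ib by (meson inner_ge_zero mult_nonneg_nonneg order_trans)
  have iab: "1/b \<le> 1/a" using a ab by (simp add: frac_le)
  have mM: "1/b * (1/b) \<le> 1/a * (1/a)" using iab ib a by (intro mult_mono) auto
  have "norm (D - z *\<^sub>R ((P ** D) ** Q)) \<le> max \<bar>1 - z * (1/a * (1/a))\<bar> \<bar>1 - z * (1/b * (1/b))\<bar> * norm D"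
  proof (rule contraction[OF form_linear])
    show "((P ** x) ** Q) \<bullet> y = x \<bullet> ((P ** y) ** Q)" for x y by (rule form_sa[OF sP sQ])
    show "1/b * (1/b) * (x \<bullet> x) \<le> ((P ** x) ** Q) \<bullet> x" for x by (rule form_lower[OF sP sQ ib ib lP lQ])
    show "((P ** x) ** Q) \<bullet> x \<le> 1/a * (1/a) * (x \<bullet> x)" for x
      by (rule form_upper[OF sP sQ _ psdP psdQ uP uQ]) (use a in simp)
  qed (rule mM)
  then show ?thesis by (simp add: power2_eq_square)
qed




lemma deriv_right:
  fixes \<psi> :: "real \<Rightarrow> real"
  assumes d: "(\<psi> has_real_derivative D) (at 0)"
    and ev: "eventually (\<lambda>t. 0 \<le> \<psi> t - \<psi> 0 + c * t) (at_right 0)"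
  shows "D + c \<ge> 0"
proof -
  have "((\<lambda>t. (\<psi> t - \<psi> 0) / (t - 0)) \<longlongrightarrow> D) (at 0)" using d by (simp add: has_field_derivative_iff)
  then have "((\<lambda>t. (\<psi> t - \<psi> 0) / t) \<longlongrightarrow> D) (at 0)" by simp
  then have lim: "((\<lambda>t. (\<psi> t - \<psi> 0) / t) \<longlongrightarrow> D) (at_right 0)"
    by (rule tendsto_mono[OF at_le, rotated]) auto
  have "eventually (\<lambda>t. - c \<le> (\<psi> t - \<psi> 0) / t) (at_right 0)"
    using ev eventually_at_right_less[of "0::real"]
  proof eventually_elim
    case (elim t)
    then have "-c * t \<le> \<psi> t - \<psi> 0" by linarith
    then show ?case using elim by (simp add: pos_le_divide_eq)
  qed
  then have "- c \<le> D" by (rule tendsto_lowerbound[OF lim]) simp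
  then show ?thesis by simp
qed

lemma deriv_left:
  fixes \<psi> :: "real \<Rightarrow> real"
  assumes d: "(\<psi> has_real_derivative D) (at 0)"
    and ev: "eventually (\<lambda>t. 0 \<le> \<psi> t - \<psi> 0 + c * t) (at_left 0)"
  shows "D + c \<le> 0"
proof -
  have "((\<lambda>t. (\<psi> t - \<psi> 0) / (t - 0)) \<longlongrightarrow> D) (at 0)" using d by (simp add: has_field_derivative_iff)
  then have "((\<lambda>t. (\<psi> t - \<psi> 0) / t) \<longlongrightarrow> D) (at 0)" by simp
  then have lim: "((\<lambda>t. (\<psi> t - \<psi> 0) / t) \<longlongrightarrow> D) (at_left 0)"
    by (rule tendsto_mono[OF at_le, rotated]) auto
  have "eventually (\<lambda>t. (\<psi> t - \<psi> 0) / t \<le> - c) (at_left 0)"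
    using ev eventually_at_left_real[of "-1" "0::real", OF neg_less_0_iff_less[THEN iffD2, OF zero_less_one]]
  proof eventually_elim
    case (elim t)
    then have "-c * t \<le> \<psi> t - \<psi> 0" by linarith
    then show ?case using elim by (simp add: neg_divide_le_eq)
  qed
  then have "D \<le> - c" by (rule tendsto_upperbound[OF lim]) simp
  then show ?thesis by simp
qed




lemma det_deriv:
  fixes M :: "real^'n^'n"
  shows "((\<lambda>t. det (mat 1 + t *\<^sub>R M)) has_real_derivative trace M) (at 0)"
proof -
  let ?P = "{p. p permutes (UNIV::'n set)}"
  have e: "(\<lambda>t. det (mat 1 + t *\<^sub>R M)) = (\<lambda>t. \<Sum>p\<in>?P. of_int (sign p) *
      (\<Prod>i\<in>UNIV. (if i = p i then 1 else 0) + t * M$i$p i))"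
    unfolding det_def by (simp add: mat_def)
  have d: "((\<lambda>t. \<Sum>p\<in>?P. of_int (sign p) * (\<Prod>i\<in>UNIV. (if i = p i then 1 else 0) + t * M$i$p i))
     has_real_derivative (\<Sum>p\<in>?P. of_int (sign p) * (\<Sum>k\<in>UNIV. M$k$p k *
        (\<Prod>i\<in>UNIV-{k}. (if i = p i then 1 else 0) + 0 * M$i$p i)))) (at 0)"
  proof (intro DERIV_sum DERIV_cmult has_field_derivative_prod)
    fix p i
    show "((\<lambda>t. (if i = p i then 1 else 0) + t * M$i$p i) has_real_derivative M$i$p i) (at 0)"
      by (auto intro!: derivative_eq_intros)
  qed
  have zero: "(\<Prod>i\<in>UNIV-{k}. (if i = p i then 1 else 0)) = (0::real)"
    if p: "p permutes (UNIV::'n set)" and pid: "p \<noteq> id" for p k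
  proof -
    obtain i0 where i0: "p i0 \<noteq> i0" using pid by (auto simp: fun_eq_iff)
    have "\<exists>i\<in>UNIV-{k}. p i \<noteq> i"
    proof (cases "i0 = k")
      case False then show ?thesis using i0 by auto
    next
      case True
      have inj: "inj p" using permutes_inj[OF p] .
      have "p (p k) \<noteq> p k"
      proof
        assume "p (p k) = p k"
        then have "p k = k" using inj by (auto dest: injD)
        then show False using i0 True by simp
      qed
      moreover have "p k \<noteq> k" using i0 True by simp
      ultimately show ?thesis by (intro bexI[of _ "p k"]) auto
    qed
    then obtain i where "i \<in> UNIV - {k}" "p i \<noteq> i" by blast
    then show ?thesis by (intro prod_zero) (auto intro!: bexI[of _ i])
  qed
  have v: "(\<Sum>p\<in>?P. of_int (sign p) * (\<Sum>k\<in>UNIV. M$k$p k *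
        (\<Prod>i\<in>UNIV-{k}. (if i = p i then 1 else 0)))) = trace M"
  proof -
    have idP: "id \<in> ?P" by (simp add: permutes_id)
    have "(\<Sum>p\<in>?P. of_int (sign p) * (\<Sum>k\<in>UNIV. M$k$p k *
        (\<Prod>i\<in>UNIV-{k}. (if i = p i then 1 else 0))))
      = of_int (sign (id::'n\<Rightarrow>'n)) * (\<Sum>k\<in>UNIV. M$k$id k *
        (\<Prod>i\<in>UNIV-{k}. (if i = id i then 1 else 0)))
        + (\<Sum>p\<in>?P-{id}. of_int (sign p) * (\<Sum>k\<in>UNIV. M$k$p k *
        (\<Prod>i\<in>UNIV-{k}. (if i = p i then 1 else (0::real)))))"
      by (rule sum.remove[OF _ idP]) (simp add: finite_permutations)
    also have "(\<Sum>p\<in>?P-{id}. of_int (sign p) * (\<Sum>k\<in>UNIV. M$k$p k *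
        (\<Prod>i\<in>UNIV-{k}. (if i = p i then 1 else (0::real))))) = 0"
      by (rule sum.neutral) (auto simp: zero)
    finally show ?thesis by (simp add: sign_id trace_def)
  qed
  show ?thesis unfolding e by (rule DERIV_cong[OF d]) (simp add: v)
qed




lemma det_pos:
  fixes \<Omega> :: "real^'n^'n"
  assumes c: "c > 0" and lo: "\<And>x. c * (x \<bullet> x) \<le> x \<bullet> (\<Omega> *v x)"
  shows "det \<Omega> > 0"
proof (rule ccontr)
  assume "\<not> det \<Omega> > 0"
  then have dle: "det \<Omega> \<le> 0" by simp
  define f where "f s = det ((1 - s) *\<^sub>R mat 1 + s *\<^sub>R \<Omega>)" for s
  have cont: "isCont f s" for s
    unfolding f_def det_def by (intro continuous_intros)
  have "\<exists>s. 0 \<le> s \<and> s \<le> 1 \<and> f s = 0"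
  proof (rule IVT2)
    show "f 1 \<le> 0" using dle by (simp add: f_def)
    show "0 \<le> f 0" by (simp add: f_def)
  qed (use cont in auto)
  then obtain s where s: "0 \<le> s" "s \<le> 1" "f s = 0" by blast
  have "invertible ((1 - s) *\<^sub>R mat 1 + s *\<^sub>R \<Omega>)"
    unfolding invertible_left_inverse matrix_left_invertible_ker
  proof (intro allI impI)
    fix x assume x0: "((1 - s) *\<^sub>R mat 1 + s *\<^sub>R \<Omega>) *v x = 0"
    have "((1 - s) *\<^sub>R mat 1 + s *\<^sub>R \<Omega>) *v x = (1 - s) *\<^sub>R x + s *\<^sub>R (\<Omega> *v x)"
      by (simp only: matrix_vector_mult_add_rdistrib mat1_mv scaleR_matrix_vector_assoc[symmetric] matrix_vector_mul_lid)
    then have "x \<bullet> ((1 - s) *\<^sub>R x + s *\<^sub>R (\<Omega> *v x)) = 0" using x0 by simp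
    then have "0 = (1 - s) * (x \<bullet> x) + s * (x \<bullet> (\<Omega> *v x))"
      by (simp only: inner_add_right inner_scaleR_right)
    moreover have "s * (c * (x \<bullet> x)) \<le> s * (x \<bullet> (\<Omega> *v x))" using lo[of x] s by (intro mult_left_mono) auto
    ultimately have "((1 - s) + s * c) * (x \<bullet> x) \<le> 0" by (simp add: algebra_simps)
    moreover have "(1 - s) + s * c > 0"
    proof (cases "s = 1")
      case True then show ?thesis using c by simp
    next
      case False then show ?thesis using s c by (simp add: add_pos_nonneg)
    qed
    ultimately have "x \<bullet> x \<le> 0" by (simp add: mult_le_0_iff)
    then show "x = 0" using inner_ge_zero[of x] by (metis inner_eq_zero_iff order_antisym)
  qed
  then have "f s \<noteq> 0" unfolding f_def by (simp add: invertible_det_nz)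
  then show False using s by simp
qed





definition Emat :: "'n \<Rightarrow> 'n \<Rightarrow> real^'n^'n" where
  "Emat i j = (\<chi> a b. (if a = i then (if b = j then 1 else 0) else 0) + (if a = j then (if b = i then 1 else 0) else 0))"

lemma Emat_sym: "sym_mat (Emat i j)"
  by (auto simp: sym_mat_def transpose_def vec_eq_iff Emat_def)

lemma delta_sum_l: "(\<Sum>b\<in>(UNIV::'n::finite set). (if b = j then (1::real) else 0) * f b) = f j"
proof -
  have "(\<Sum>b\<in>(UNIV::'n::finite set). (if b = j then (1::real) else 0) * f b) = (\<Sum>b\<in>UNIV. if b = j then f b else 0)"
    by (rule sum.cong) auto
  then show ?thesis by simp
qed

lemma delta_sum_r: "(\<Sum>b\<in>(UNIV::'n::finite set). f b * (if b = j then (c::real) else 0)) = f j * c"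
proof -
  have "(\<Sum>b\<in>(UNIV::'n::finite set). f b * (if b = j then (c::real) else 0)) = (\<Sum>b\<in>UNIV. if b = j then f b * c else 0)"
    by (rule sum.cong) auto
  then show ?thesis by simp
qed

lemma delta_sum_0: "(\<Sum>b\<in>(UNIV::'n::finite set). (if b = j then (c::real) else 0)) = c"
  by simp

definition elem :: "'n \<Rightarrow> 'n \<Rightarrow> real^'n^'n" where
  "elem i j = (\<chi> a b. if a = i then (if b = j then 1 else 0) else 0)"

lemma Emat_elem: "Emat i j = elem i j + elem j i"
  by (simp add: vec_eq_iff Emat_def elem_def)

lemma elem_mm: "(elem i j ** (A::real^'n^'n)) = (\<chi> a c. if a = i then A$j$c else 0)"
  unfolding vec_eq_iff
proof (intro allI)
  fix a c
  show "(elem i j ** A) $ a $ c = (\<chi> a c. if a = i then A$j$c else 0) $ a $ c"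
    by (cases "a = i") (simp_all add: matrix_matrix_mult_def elem_def delta_sum_l)
qed

lemma elem_mv: "(elem i j *v (x::real^'n)) = (\<chi> a. if a = i then x$j else 0)"
  unfolding vec_eq_iff
proof (intro allI)
  fix a
  show "(elem i j *v x) $ a = (\<chi> a. if a = i then x$j else 0) $ a"
    by (cases "a = i") (simp_all add: matrix_vector_mult_def elem_def delta_sum_l)
qed

lemma Emat_mm: "(Emat i j ** (A::real^'n^'n)) = (\<chi> a c. (if a = i then A$j$c else 0) + (if a = j then A$i$c else 0))"
  by (simp add: Emat_elem mm_add_r elem_mm vec_eq_iff)

lemma Emat_mv: "(Emat i j *v (x::real^'n)) = (\<chi> a. (if a = i then x$j else 0) + (if a = j then x$i else 0))"
  by (simp add: Emat_elem matrix_vector_mult_add_rdistrib elem_mv vec_eq_iff)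

lemma Emat_trace: "trace ((A::real^'n^'n) ** Emat i j) = A$j$i + A$i$j"
proof -
  have "trace (A ** Emat i j) = trace (Emat i j ** A)" by (rule trace_mul_sym)
  also have "\<dots> = A$j$i + A$i$j"
    unfolding Emat_mm trace_def by (simp add: sum.distrib delta_sum_0)
  finally show ?thesis .
qed

lemma Emat_sum: "(\<Sum>a\<in>UNIV. \<Sum>b\<in>UNIV. (Emat i j :: real^'n^'n)$a$b) = 2"
proof -
  have "(Emat i j :: real^'n^'n)$a$b = (if a = i then (if b = j then 1 else 0) else 0) + (if a = j then (if b = i then 1 else 0) else 0)" for a b
    by (simp add: Emat_def)
  then have "(\<Sum>a\<in>UNIV. \<Sum>b\<in>UNIV. (Emat i j :: real^'n^'n)$a$b)
     = (\<Sum>a\<in>UNIV. (if a = i then 1 else 0) + (if a = j then 1 else 0))"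
    by (intro sum.cong) (auto simp: sum.distrib delta_sum_0)
  also have "\<dots> = 2" by (simp add: sum.distrib delta_sum_0)
  finally show ?thesis .
qed

lemma Emat_entry: "(Emat i j :: real^'n^'n)$a$b \<ge> 0" "(Emat i j :: real^'n^'n)$a$b \<le> 2"
  "(Emat i j :: real^'n^'n)$a$b \<noteq> 0 \<Longrightarrow> (a = i \<and> b = j) \<or> (a = j \<and> b = i)"
  by (auto simp: Emat_def split: if_splits)

lemma Emat_form: "\<bar>x \<bullet> (Emat i j *v x)\<bar> \<le> 2 * (x \<bullet> x)"
proof -
  have e: "x \<bullet> (Emat i j *v x) = 2 * (x$i * x$j)"
    unfolding Emat_mv by (simp add: inner_vec_def distrib_left sum.distrib delta_sum_r)
  have ci: "(x$k)^2 \<le> x \<bullet> x" for k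
  proof -
    have "\<bar>x$k\<bar> \<le> norm x" by (rule component_le_norm_cart)
    then have "\<bar>x$k\<bar>^2 \<le> (norm x)^2" by (intro power_mono) auto
    then show ?thesis by (simp add: power2_norm_eq_inner)
  qed
  have "0 \<le> (\<bar>x$i\<bar> - \<bar>x$j\<bar>)^2" by simp
  then have h: "2 * (\<bar>x$i\<bar> * \<bar>x$j\<bar>) \<le> (x$i)^2 + (x$j)^2"
    by (simp add: power2_diff power2_abs)
  have "\<bar>x \<bullet> (Emat i j *v x)\<bar> = 2 * (\<bar>x$i\<bar> * \<bar>x$j\<bar>)" unfolding e by (simp add: abs_mult)
  then show ?thesis using h ci[of i] ci[of j] by linarith
qed

lemma trace_scale: "trace ((k::real) *\<^sub>R (A::real^'n^'n)) = k * trace A"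
  by (simp add: trace_def sum_distrib_left)




lemma ell_R:
  fixes \<Omega> E :: "real^'n^'n"
  assumes E0: "\<And>a b. E$a$b \<ge> 0" and Es: "(\<Sum>a\<in>UNIV. \<Sum>b\<in>UNIV. E$a$b) = 2" and t: "t \<ge> 0"
  shows "(\<Sum>a\<in>UNIV. \<Sum>b\<in>UNIV. \<bar>(\<Omega> + t *\<^sub>R E)$a$b\<bar>) \<le> (\<Sum>a\<in>UNIV. \<Sum>b\<in>UNIV. \<bar>\<Omega>$a$b\<bar>) + 2 * t"
proof -
  have "(\<Sum>a\<in>UNIV. \<Sum>b\<in>UNIV. \<bar>(\<Omega> + t *\<^sub>R E)$a$b\<bar>) \<le> (\<Sum>a\<in>UNIV. \<Sum>b\<in>UNIV. \<bar>\<Omega>$a$b\<bar> + t * E$a$b)"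
  proof (intro sum_mono)
    fix a b
    show "\<bar>(\<Omega> + t *\<^sub>R E)$a$b\<bar> \<le> \<bar>\<Omega>$a$b\<bar> + t * E$a$b"
      using E0[of a b] t abs_triangle_ineq[of "\<Omega>$a$b" "t * E$a$b"] by (simp add: abs_mult)
  qed
  also have "\<dots> = (\<Sum>a\<in>UNIV. \<Sum>b\<in>UNIV. \<bar>\<Omega>$a$b\<bar>) + t * 2"
    by (simp add: sum.distrib sum_distrib_left[symmetric] Es)
  finally show ?thesis by simp
qed

lemma ell_L:
  fixes \<Omega> E :: "real^'n^'n"
  assumes E0: "\<And>a b. E$a$b \<ge> 0" and Es: "(\<Sum>a\<in>UNIV. \<Sum>b\<in>UNIV. E$a$b) = 2" and t: "t \<le> 0"
  shows "(\<Sum>a\<in>UNIV. \<Sum>b\<in>UNIV. \<bar>(\<Omega> + t *\<^sub>R E)$a$b\<bar>) \<le> (\<Sum>a\<in>UNIV. \<Sum>b\<in>UNIV. \<bar>\<Omega>$a$b\<bar>) - 2 * t"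
proof -
  have "(\<Sum>a\<in>UNIV. \<Sum>b\<in>UNIV. \<bar>(\<Omega> + t *\<^sub>R E)$a$b\<bar>) \<le> (\<Sum>a\<in>UNIV. \<Sum>b\<in>UNIV. \<bar>\<Omega>$a$b\<bar> + (-t) * E$a$b)"
  proof (intro sum_mono)
    fix a b
    show "\<bar>(\<Omega> + t *\<^sub>R E)$a$b\<bar> \<le> \<bar>\<Omega>$a$b\<bar> + (-t) * E$a$b"
      using E0[of a b] t abs_triangle_ineq[of "\<Omega>$a$b" "t * E$a$b"] by (simp add: abs_mult)
  qed
  also have "\<dots> = (\<Sum>a\<in>UNIV. \<Sum>b\<in>UNIV. \<bar>\<Omega>$a$b\<bar>) + (-t) * 2"
    by (simp only: sum.distrib sum_distrib_left[symmetric] Es)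
  finally show ?thesis by simp
qed

lemma ell_P:
  fixes \<Omega> E :: "real^'n^'n"
  assumes E0: "\<And>a b. E$a$b \<ge> 0" and E2: "\<And>a b. E$a$b \<le> 2" and Es: "(\<Sum>a\<in>UNIV. \<Sum>b\<in>UNIV. E$a$b) = 2"
    and Ew: "\<And>a b. E$a$b \<noteq> 0 \<Longrightarrow> \<Omega>$a$b = w" and w: "w > 0" and t: "t \<le> 0" "- w / 2 \<le> t"
  shows "(\<Sum>a\<in>UNIV. \<Sum>b\<in>UNIV. \<bar>(\<Omega> + t *\<^sub>R E)$a$b\<bar>) \<le> (\<Sum>a\<in>UNIV. \<Sum>b\<in>UNIV. \<bar>\<Omega>$a$b\<bar>) + 2 * t"
proof -
  have "(\<Sum>a\<in>UNIV. \<Sum>b\<in>UNIV. \<bar>(\<Omega> + t *\<^sub>R E)$a$b\<bar>) \<le> (\<Sum>a\<in>UNIV. \<Sum>b\<in>UNIV. \<bar>\<Omega>$a$b\<bar> + t * E$a$b)"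
  proof (intro sum_mono)
    fix a b
    show "\<bar>(\<Omega> + t *\<^sub>R E)$a$b\<bar> \<le> \<bar>\<Omega>$a$b\<bar> + t * E$a$b"
    proof (cases "E$a$b = 0")
      case True then show ?thesis by simp
    next
      case False
      then have om: "\<Omega>$a$b = w" by (rule Ew)
      have "t * 2 \<le> t * E$a$b" using t E2[of a b] by (intro mult_left_mono_neg) auto
      then have "0 \<le> w + t * E$a$b" using t by linarith
      then show ?thesis using om w by simp
    qed
  qed
  also have "\<dots> = (\<Sum>a\<in>UNIV. \<Sum>b\<in>UNIV. \<bar>\<Omega>$a$b\<bar>) + t * 2"
    by (simp only: sum.distrib sum_distrib_left[symmetric] Es)
  finally show ?thesis by simp
qed

lemma ell_N:
  fixes \<Omega> E :: "real^'n^'n"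
  assumes E0: "\<And>a b. E$a$b \<ge> 0" and E2: "\<And>a b. E$a$b \<le> 2" and Es: "(\<Sum>a\<in>UNIV. \<Sum>b\<in>UNIV. E$a$b) = 2"
    and Ew: "\<And>a b. E$a$b \<noteq> 0 \<Longrightarrow> \<Omega>$a$b = w" and w: "w < 0" and t: "t \<ge> 0" "t \<le> - w / 2"
  shows "(\<Sum>a\<in>UNIV. \<Sum>b\<in>UNIV. \<bar>(\<Omega> + t *\<^sub>R E)$a$b\<bar>) \<le> (\<Sum>a\<in>UNIV. \<Sum>b\<in>UNIV. \<bar>\<Omega>$a$b\<bar>) - 2 * t"
proof -
  have "(\<Sum>a\<in>UNIV. \<Sum>b\<in>UNIV. \<bar>(\<Omega> + t *\<^sub>R E)$a$b\<bar>) \<le> (\<Sum>a\<in>UNIV. \<Sum>b\<in>UNIV. \<bar>\<Omega>$a$b\<bar> + (-t) * E$a$b)"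
  proof (intro sum_mono)
    fix a b
    show "\<bar>(\<Omega> + t *\<^sub>R E)$a$b\<bar> \<le> \<bar>\<Omega>$a$b\<bar> + (-t) * E$a$b"
    proof (cases "E$a$b = 0")
      case True then show ?thesis by simp
    next
      case False
      then have om: "\<Omega>$a$b = w" by (rule Ew)
      have "t * E$a$b \<le> t * 2" using t E2[of a b] by (intro mult_left_mono) auto
      then have "w + t * E$a$b \<le> 0" using t by linarith
      then show ?thesis using om w by simp
    qed
  qed
  also have "\<dots> = (\<Sum>a\<in>UNIV. \<Sum>b\<in>UNIV. \<bar>\<Omega>$a$b\<bar>) + (-t) * 2"
    by (simp only: sum.distrib sum_distrib_left[symmetric] Es)
  finally show ?thesis by simp
qed




lemma transpose_add': "transpose ((A::real^'n^'n) + B) = transpose A + transpose B"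
  by (simp add: transpose_def vec_eq_iff)

lemma kkt_entry:
  fixes S \<Omega> \<Gamma> :: "real^'n^'n"
  assumes sS: "sym_mat S" and lam: "lam > 0" and pd: "pos_def \<Omega>"
    and min: "\<And>\<Omega>'. pos_def \<Omega>' \<Longrightarrow> glasso_obj S lam \<Omega> \<le> glasso_obj S lam \<Omega>'"
    and OG: "\<Omega> ** \<Gamma> = mat 1" and sG: "sym_mat \<Gamma>"
    and c: "c > 0" and lo: "\<And>x. c * (x \<bullet> x) \<le> x \<bullet> (\<Omega> *v x)"
  shows "\<bar>\<Gamma>$i$j - S$i$j\<bar> \<le> lam"
    "\<Omega>$i$j > 0 \<Longrightarrow> \<Gamma>$i$j - S$i$j = lam"
    "\<Omega>$i$j < 0 \<Longrightarrow> \<Gamma>$i$j - S$i$j = - lam"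
proof -
  have sO: "sym_mat \<Omega>" using pd unfolding pos_def_def by simp
  define E where "E = (Emat i j :: real^'n^'n)"
  define M where "M = \<Gamma> ** E"
  define dfun where "dfun t = det (mat 1 + t *\<^sub>R M)" for t
  define \<psi> where "\<psi> t = - ln (dfun t) + t * trace (S ** E)" for t
  define ell where "ell t = (\<Sum>a\<in>UNIV. \<Sum>b\<in>UNIV. \<bar>(\<Omega> + t *\<^sub>R E)$a$b\<bar>)" for t
  define d where "d = \<Gamma>$i$j - S$i$j"
  define w where "w = \<Omega>$i$j"
  have detpos: "det \<Omega> > 0" by (rule det_pos[OF c lo])
  have dd: "(dfun has_real_derivative trace M) (at 0)" unfolding dfun_def by (rule det_deriv)
  have d0: "dfun 0 = 1" by (simp add: dfun_def)
  have lnd: "((\<lambda>t. ln (dfun t)) has_real_derivative trace M) (at 0)"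
    using DERIV_chain2[OF DERIV_ln[of "dfun 0"] dd] d0 by simp
  have lin: "((\<lambda>t. t * trace (S ** E)) has_real_derivative trace (S ** E)) (at 0)"
    using DERIV_cmult_right[OF DERIV_ident, of "trace (S ** E)" 0] by simp
  have dpsi: "(\<psi> has_real_derivative (- trace M + trace (S ** E))) (at 0)"
    unfolding \<psi>_def by (intro DERIV_add DERIV_minus lnd lin)
  have psi0: "\<psi> 0 = 0" by (simp add: \<psi>_def d0)
  have Dv: "- trace M + trace (S ** E) = - 2 * d"
    using sS sG unfolding M_def E_def d_def Emat_trace sym_mat_def
    by (simp add: vec_eq_iff transpose_def)
  have ev_d: "eventually (\<lambda>t. dfun t > 0) (at 0)"
  proof -
    have "isCont dfun 0" by (rule DERIV_isCont[OF dd])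
    then have "(dfun \<longlongrightarrow> dfun 0) (at 0)" by (simp add: isCont_def)
    then show ?thesis by (rule order_tendstoD) (simp add: d0)
  qed
  have ev_small: "eventually (\<lambda>t. \<bar>t\<bar> < r) (at (0::real))" if "r > 0" for r
  proof -
    have "((\<lambda>t. \<bar>t\<bar>) \<longlongrightarrow> \<bar>0::real\<bar>) (at 0)" by (intro tendsto_rabs tendsto_ident_at)
    then show ?thesis by (rule order_tendstoD) (use that in simp)
  qed
  have key: "0 \<le> \<psi> t - \<psi> 0 + lam * (ell t - ell 0)" if t1: "\<bar>t\<bar> < c / 2" and t2: "dfun t > 0" for t
  proof -
    have sE: "sym_mat E" unfolding E_def by (rule Emat_sym)
    have pdt: "pos_def (\<Omega> + t *\<^sub>R E)"
      unfolding pos_def_def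
    proof (intro conjI allI impI)
      show "sym_mat (\<Omega> + t *\<^sub>R E)" using sO sE unfolding sym_mat_def by (simp add: transpose_scalar transpose_add')
      fix x :: "real^'n" assume x0: "x \<noteq> 0"
      have "x \<bullet> ((\<Omega> + t *\<^sub>R E) *v x) = x \<bullet> (\<Omega> *v x) + t * (x \<bullet> (E *v x))"
        by (simp add: matrix_vector_mult_add_rdistrib scaleR_matrix_vector_assoc[symmetric] inner_add_right)
      moreover have "\<bar>t * (x \<bullet> (E *v x))\<bar> \<le> \<bar>t\<bar> * (2 * (x \<bullet> x))"
        unfolding abs_mult E_def by (intro mult_left_mono Emat_form) simp
      moreover have "\<bar>t\<bar> * (2 * (x \<bullet> x)) < c * (x \<bullet> x)"
        using t1 x0 by (simp add: mult.assoc[symmetric])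
      ultimately show "x \<bullet> ((\<Omega> + t *\<^sub>R E) *v x) > 0" using lo[of x] by linarith
    qed
    have m: "glasso_obj S lam \<Omega> \<le> glasso_obj S lam (\<Omega> + t *\<^sub>R E)" by (rule min[OF pdt])
    have fac: "\<Omega> + t *\<^sub>R E = \<Omega> ** (mat 1 + t *\<^sub>R M)"
      unfolding M_def by (simp add: mm_add_l mm_scale_r matrix_mul_assoc OG)
    have det_eq: "det (\<Omega> + t *\<^sub>R E) = det \<Omega> * dfun t" unfolding fac dfun_def by (rule det_mul)
    have ln_eq: "ln (det (\<Omega> + t *\<^sub>R E)) = ln (det \<Omega>) + ln (dfun t)"
      unfolding det_eq using detpos t2 by (simp add: ln_mult)
    have tr_eq: "trace (S ** (\<Omega> + t *\<^sub>R E)) = trace (S ** \<Omega>) + t * trace (S ** E)"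
      by (simp add: mm_add_l mm_scale_r trace_add trace_scale)
    have g1: "glasso_obj S lam (\<Omega> + t *\<^sub>R E) = - ln (det \<Omega>) - ln (dfun t) + trace (S ** \<Omega>) + t * trace (S ** E) + lam * ell t"
      unfolding glasso_obj_def ln_eq tr_eq ell_def by simp
    have g0: "glasso_obj S lam \<Omega> = - ln (det \<Omega>) + trace (S ** \<Omega>) + lam * ell 0"
      unfolding glasso_obj_def ell_def by simp
    show ?thesis using m unfolding g1 g0 \<psi>_def psi0[unfolded \<psi>_def] by (simp add: algebra_simps)
  qed
  have E0: "\<And>a b. E$a$b \<ge> 0" and E2: "\<And>a b. E$a$b \<le> 2" unfolding E_def by (rule Emat_entry)+
  have Es: "(\<Sum>a\<in>UNIV. \<Sum>b\<in>UNIV. E$a$b) = 2" unfolding E_def by (rule Emat_sum)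
  have Ew: "\<Omega>$a$b = w" if "E$a$b \<noteq> 0" for a b
  proof -
    have "(a = i \<and> b = j) \<or> (a = j \<and> b = i)" using that unfolding E_def by (rule Emat_entry)
    then show ?thesis using sO unfolding sym_mat_def w_def by (auto simp: vec_eq_iff transpose_def)
  qed
  have ell0: "ell 0 = (\<Sum>a\<in>UNIV. \<Sum>b\<in>UNIV. \<bar>\<Omega>$a$b\<bar>)" by (simp add: ell_def)
  have ev_base: "eventually (\<lambda>t. \<bar>t\<bar> < c / 2 \<and> dfun t > 0) (at 0)"
    using ev_small[of "c/2"] ev_d c by (auto intro: eventually_conj)
  have to_right: "eventually P (at_right (0::real))" if "eventually P (at 0)" for P
    by (rule filter_leD[OF at_le that]) simp
  have to_left: "eventually P (at_left (0::real))" if "eventually P (at 0)" for P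
    by (rule filter_leD[OF at_le that]) simp
  have "0 \<le> - 2 * d + 2 * lam"
  proof -
    have "eventually (\<lambda>t. 0 \<le> \<psi> t - \<psi> 0 + (2 * lam) * t) (at_right 0)"
      using to_right[OF ev_base] eventually_at_right_less[of "0::real"]
    proof eventually_elim
      case (elim t)
      then have "ell t - ell 0 \<le> 2 * t" using ell_R[OF E0 Es, of t \<Omega>] unfolding ell0 ell_def by simp
      then have "lam * (ell t - ell 0) \<le> lam * (2 * t)" using lam by (intro mult_left_mono) auto
      then show ?case using key[of t] elim by (simp add: algebra_simps)
    qed
    from deriv_right[OF dpsi this] show ?thesis unfolding Dv .
  qed
  then have R: "d \<le> lam" by simp
  have "- 2 * d + (- 2 * lam) \<le> 0"
  proof -
    have "eventually (\<lambda>t. 0 \<le> \<psi> t - \<psi> 0 + (- 2 * lam) * t) (at_left 0)"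
      using to_left[OF ev_base] eventually_at_left_real[of "-1" "0::real", OF neg_less_0_iff_less[THEN iffD2, OF zero_less_one]]
    proof eventually_elim
      case (elim t)
      then have "ell t - ell 0 \<le> - 2 * t" using ell_L[OF E0 Es, of t \<Omega>] unfolding ell0 ell_def by simp
      then have "lam * (ell t - ell 0) \<le> lam * (- 2 * t)" using lam by (intro mult_left_mono) auto
      then show ?case using key[of t] elim by (simp add: algebra_simps)
    qed
    from deriv_left[OF dpsi this] show ?thesis unfolding Dv .
  qed
  then have L: "- lam \<le> d" by simp
  show "\<bar>\<Gamma>$i$j - S$i$j\<bar> \<le> lam" using R L unfolding d_def by simp
  show "\<Gamma>$i$j - S$i$j = lam" if wpos: "\<Omega>$i$j > 0"
  proof -
    have wp: "w > 0" using wpos unfolding w_def .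
    have "- 2 * d + 2 * lam \<le> 0"
    proof -
      have "eventually (\<lambda>t. 0 \<le> \<psi> t - \<psi> 0 + (2 * lam) * t) (at_left 0)"
        using to_left[OF ev_base] to_left[OF ev_small[of "w/2", OF half_gt_zero[OF wp]]]
          eventually_at_left_real[of "-1" "0::real", OF neg_less_0_iff_less[THEN iffD2, OF zero_less_one]]
      proof eventually_elim
        case (elim t)
        then have "ell t - ell 0 \<le> 2 * t" using ell_P[OF E0 E2 Es Ew wp, of t] unfolding ell0 ell_def by simp
        then have "lam * (ell t - ell 0) \<le> lam * (2 * t)" using lam by (intro mult_left_mono) auto
        then show ?case using key[of t] elim by (simp add: algebra_simps)
      qed
      from deriv_left[OF dpsi this] show ?thesis unfolding Dv .
    qed
    then show ?thesis using R unfolding d_def by simp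
  qed
  show "\<Gamma>$i$j - S$i$j = - lam" if wneg: "\<Omega>$i$j < 0"
  proof -
    have wn: "w < 0" using wneg unfolding w_def .
    have "0 \<le> - 2 * d + (- 2 * lam)"
    proof -
      have "eventually (\<lambda>t. 0 \<le> \<psi> t - \<psi> 0 + (- 2 * lam) * t) (at_right 0)"
        using to_right[OF ev_base] to_right[OF ev_small[of "- w/2", OF half_gt_zero[OF neg_0_less_iff_less[THEN iffD2, OF wn]], simplified]] eventually_at_right_less[of "0::real"]
      proof eventually_elim
        case (elim t)
        then have "ell t - ell 0 \<le> - 2 * t" using ell_N[OF E0 E2 Es Ew wn, of t] unfolding ell0 ell_def by simp
        then have "lam * (ell t - ell 0) \<le> lam * (- 2 * t)" using lam by (intro mult_left_mono) auto
        then show ?case using key[of t] elim by (simp add: algebra_simps)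
      qed
      from deriv_right[OF dpsi this] show ?thesis unfolding Dv .
    qed
    then show ?thesis using L unfolding d_def by simp
  qed
qed




lemma kkt_fix:
  fixes S \<Omega> \<Gamma> :: "real^'n^'n"
  assumes sS: "sym_mat S" and lam: "lam > 0" and pd: "pos_def \<Omega>"
    and min: "\<And>\<Omega>'. pos_def \<Omega>' \<Longrightarrow> glasso_obj S lam \<Omega> \<le> glasso_obj S lam \<Omega>'"
    and OG: "\<Omega> ** \<Gamma> = mat 1" and sG: "sym_mat \<Gamma>"
    and c: "c > 0" and lo: "\<And>x. c * (x \<bullet> x) \<le> x \<bullet> (\<Omega> *v x)" and z: "z \<ge> 0"
  shows "clip lam (\<Gamma> - S + z *\<^sub>R \<Omega>) = \<Gamma> - S"
  unfolding vec_eq_iff clip_def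
proof (intro allI)
  fix i j
  note K = kkt_entry[OF sS lam pd min OG sG c lo, where i=i and j=j]
  have "min (max (\<Gamma>$i$j - S$i$j + z * \<Omega>$i$j) (- lam)) lam = \<Gamma>$i$j - S$i$j"
  proof (cases "\<Omega>$i$j > 0")
    case True
    then have "\<Gamma>$i$j - S$i$j = lam" using K by auto
    moreover have "z * \<Omega>$i$j \<ge> 0" using True z by simp
    ultimately show ?thesis using lam by simp
  next
    case False
    show ?thesis
    proof (cases "\<Omega>$i$j < 0")
      case True
      then have "\<Gamma>$i$j - S$i$j = - lam" using K by auto
      moreover have "z * \<Omega>$i$j \<le> 0" using True z by (simp add: mult_nonneg_nonpos)
      ultimately show ?thesis using lam by simp
    next
      case False2: False
      then have "\<Omega>$i$j = 0" using False by simp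
      then show ?thesis using K(1) by (simp add: abs_le_iff)
    qed
  qed
  then show "(\<chi> i j. min (max ((\<Gamma> - S + z *\<^sub>R \<Omega>) $ i $ j) (- lam)) lam) $ i $ j = (\<Gamma> - S) $ i $ j"
    by simp
qed

lemma clip_lip:
  fixes X Y :: "real^'n^'n"
  assumes "l \<ge> 0"
  shows "norm (clip l X - clip l Y) \<le> norm (X - Y)"
proof -
  have e: "\<bar>min (max x (- l)) l - min (max y (- l)) l\<bar> \<le> \<bar>x - y\<bar>" for x y :: real
    using assms by (auto simp: min_def max_def abs_if)
  have "frob_norm (clip l X - clip l Y) \<le> frob_norm (X - Y)"
    unfolding frob_norm_def
  proof (intro real_sqrt_le_mono sum_mono)
    fix i j
    have "\<bar>(clip l X - clip l Y)$i$j\<bar> \<le> \<bar>(X - Y)$i$j\<bar>" using e[of "X$i$j" "Y$i$j"] by (simp add: clip_def)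
    then show "((clip l X - clip l Y)$i$j)^2 \<le> ((X - Y)$i$j)^2" by (simp add: abs_le_square_iff)
  qed
  then show ?thesis by (simp add: frob_norm_eq)
qed

lemma pos_def_inv:
  fixes \<Omega> :: "real^'n^'n"
  assumes "pos_def \<Omega>" shows "invertible \<Omega>"
  unfolding invertible_left_inverse matrix_left_invertible_ker
proof (intro allI impI)
  fix x assume "\<Omega> *v x = 0"
  then show "x = 0" using assms unfolding pos_def_def by (metis inner_zero_right less_irrefl)
qed




theorem lemma3:
  fixes Sstar Omegastar :: "real^'p^'p"
    and lam a b :: real
    and n t0 K :: nat
    and SW :: "nat \<Rightarrow> nat \<Rightarrow> real^'p^'p"
    and Gamma :: "nat \<Rightarrow> nat \<Rightarrow> nat \<Rightarrow> real^'p^'p"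
    and zeta :: "nat \<Rightarrow> nat \<Rightarrow> nat \<Rightarrow> real"
  assumes Sstar_pd: "pos_def Sstar"
    and lam_pos: "lam > 0"
    and Omega_pd: "pos_def Omegastar"
    and Omega_min: "\<And>\<Omega>. pos_def \<Omega> \<Longrightarrow> glasso_obj Sstar lam Omegastar \<le> glasso_obj Sstar lam \<Omega>"
    and SW_sym: "\<And>i t. sym_mat (SW i t)"
    and init: "\<And>i. i < n \<Longrightarrow> Gamma i t0 K = SW i t0 + lam *\<^sub>R mat 1"
    and warm: "\<And>i t. i < n \<Longrightarrow> t > t0 \<Longrightarrow> Gamma i t 0 = Gamma i (t - 1) K"
    and step: "\<And>i t k. i < n \<Longrightarrow> t > t0 \<Longrightarrow> 1 \<le> k \<Longrightarrow> k \<le> K \<Longrightarrow>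
       Gamma i t k = clip lam (Gamma i t (k - 1) - SW i t
                       + zeta i t (k - 1) *\<^sub>R matrix_inv (Gamma i t (k - 1))) + SW i t"
    and zeta_pos: "\<And>i t k. i < n \<Longrightarrow> t > t0 \<Longrightarrow> 1 \<le> k \<Longrightarrow> k \<le> K \<Longrightarrow> zeta i t (k - 1) > 0"
    and ab: "0 < a" "a < b"
    and bounds_t0: "\<And>i. i < n \<Longrightarrow>
       loewner_le (a *\<^sub>R mat 1) (Gamma i t0 K) \<and> loewner_le (Gamma i t0 K) (b *\<^sub>R mat 1)"
    and bounds: "\<And>i t k. i < n \<Longrightarrow> t > t0 \<Longrightarrow> 1 \<le> k \<Longrightarrow> k \<le> K \<Longrightarrow>
       loewner_le (a *\<^sub>R mat 1) (Gamma i t k) \<and> loewner_le (Gamma i t k) (b *\<^sub>R mat 1)"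
    and bounds_star:
       "loewner_le (a *\<^sub>R mat 1) (matrix_inv Omegastar) \<and> loewner_le (matrix_inv Omegastar) (b *\<^sub>R mat 1)"
  shows "\<forall>i t k. i < n \<longrightarrow> t > t0 \<longrightarrow> 1 \<le> k \<longrightarrow> k \<le> K \<longrightarrow>
     frob_norm (Gamma i t k - matrix_inv Omegastar)
       \<le> max \<bar>1 - zeta i t (k - 1) / a^2\<bar> \<bar>1 - zeta i t (k - 1) / b^2\<bar>
           * frob_norm (Gamma i t (k - 1) - matrix_inv Omegastar)
         + 2 * frob_norm (SW i t - Sstar)"
proof (intro allI impI)
  fix i t k
  assume i: "i < n" and t: "t > t0" and k1: "1 \<le> k" and kK: "k \<le> K"
  define G where "G = Gamma i t (k - 1)"
  define Gs where "Gs = matrix_inv Omegastar"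
  define z where "z = zeta i t (k - 1)"
  have z0: "z \<ge> 0" using zeta_pos[OF i t k1 kK] unfolding z_def by simp
  have bG: "loewner_le (a *\<^sub>R mat 1) G \<and> loewner_le G (b *\<^sub>R mat 1)"
  proof (cases "k = 1")
    case False
    then show ?thesis unfolding G_def using bounds[OF i t _ _, of "k - 1"] k1 kK by simp
  next
    case True
    then have G': "G = Gamma i (t - 1) K" unfolding G_def using warm[OF i t] by simp
    show ?thesis
    proof (cases "t - 1 = t0")
      case True then show ?thesis unfolding G' using bounds_t0[OF i] by simp
    next
      case False
      then have "t - 1 > t0" using t by simp
      then show ?thesis unfolding G' using bounds[OF i _ _ order_refl, of "t - 1"] k1 kK by simp
    qed
  qed
  have sGm: "sym_mat G" using loewner_lower(1) bG by blast
  have loG: "\<And>x. a * (x \<bullet> x) \<le> x \<bullet> (G *v x)" using loewner_lower(2) bG by blast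
  have upG: "\<And>x. x \<bullet> (G *v x) \<le> b * (x \<bullet> x)" using loewner_upper(2) bG by blast
  note IG = inv_bounds[OF sGm ab(1) loG upG]
  define P where "P = matrix_inv G"
  have sGs: "sym_mat Gs" using loewner_lower(1) bounds_star unfolding Gs_def by blast
  have loGs: "\<And>x. a * (x \<bullet> x) \<le> x \<bullet> (Gs *v x)" using loewner_lower(2) bounds_star unfolding Gs_def by blast
  have upGs: "\<And>x. x \<bullet> (Gs *v x) \<le> b * (x \<bullet> x)" using loewner_upper(2) bounds_star unfolding Gs_def by blast
  note IGs = inv_bounds[OF sGs ab(1) loGs upGs]
  have invO: "invertible Omegastar" by (rule pos_def_inv[OF Omega_pd])
  note IO = invertible_inv[OF invO]
  have OGs: "Omegastar ** Gs = mat 1" using IO(1) unfolding Gs_def .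
  have QO: "Omegastar = matrix_inv Gs" by (rule inv_unique[OF IGs(2) OGs])
  have GsO: "Gs ** Omegastar = mat 1" using IGs(2) QO by simp
  have sO: "sym_mat Omegastar" using IGs(4) QO by simp
  have loO: "\<And>x. (1/b) * (x \<bullet> x) \<le> x \<bullet> (Omegastar *v x)" using IGs(5) QO by simp
  have upO: "\<And>x. x \<bullet> (Omegastar *v x) \<le> (1/a) * (x \<bullet> x)" using IGs(6) QO by simp
  have b0: "1/b > 0" using ab by simp
  have sSstar: "sym_mat Sstar" using Sstar_pd unfolding pos_def_def by simp
  have kfix: "clip lam (Gs - Sstar + z *\<^sub>R Omegastar) = Gs - Sstar"
    by (rule kkt_fix[OF sSstar lam_pos Omega_pd Omega_min OGs sGs b0 loO z0])
  have stepk: "Gamma i t k = clip lam (G - SW i t + z *\<^sub>R P) + SW i t"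
    unfolding G_def z_def P_def using step[OF i t k1 kK] .
  define D where "D = G - Gs"
  define X where "X = G - SW i t + z *\<^sub>R P"
  define Y where "Y = Gs - Sstar + z *\<^sub>R Omegastar"
  have PD: "(P ** D) ** Omegastar = Omegastar - P"
  proof -
    have "(P ** D) ** Omegastar = ((P ** G) ** Omegastar) - (P ** (Gs ** Omegastar))"
      unfolding D_def by (simp add: mm_diff_l mm_diff_r matrix_mul_assoc)
    also have "\<dots> = Omegastar - P" using IG(3) GsO unfolding P_def by simp
    finally show ?thesis .
  qed
  have XY: "X - Y = (D - z *\<^sub>R ((P ** D) ** Omegastar)) - (SW i t - Sstar)"
    unfolding X_def Y_def PD by (simp add: D_def algebra_simps)
  have "Gamma i t k - Gs = (clip lam X - clip lam Y) + (SW i t - Sstar)"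
    using stepk kfix unfolding X_def Y_def by (simp add: algebra_simps)
  then have "norm (Gamma i t k - Gs) \<le> norm (clip lam X - clip lam Y) + norm (SW i t - Sstar)"
    by (simp add: norm_triangle_ineq)
  also have "norm (clip lam X - clip lam Y) \<le> norm (X - Y)" by (rule clip_lip) (use lam_pos in simp)
  also have "norm (X - Y) \<le> norm (D - z *\<^sub>R ((P ** D) ** Omegastar)) + norm (SW i t - Sstar)"
    unfolding XY by (rule norm_triangle_ineq4)
  also have "norm (D - z *\<^sub>R ((P ** D) ** Omegastar)) \<le> max \<bar>1 - z / a^2\<bar> \<bar>1 - z / b^2\<bar> * norm D"
    by (rule mat_contraction[OF ab(1) less_imp_le[OF ab(2)] IG(4)[folded P_def] sO
          IG(5)[folded P_def] loO IG(6)[folded P_def] upO])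
  finally have "norm (Gamma i t k - Gs) \<le> max \<bar>1 - z / a^2\<bar> \<bar>1 - z / b^2\<bar> * norm D + 2 * norm (SW i t - Sstar)"
    by simp
  then show "frob_norm (Gamma i t k - matrix_inv Omegastar)
       \<le> max \<bar>1 - zeta i t (k - 1) / a^2\<bar> \<bar>1 - zeta i t (k - 1) / b^2\<bar>
           * frob_norm (Gamma i t (k - 1) - matrix_inv Omegastar)
         + 2 * frob_norm (SW i t - Sstar)"
    unfolding frob_norm_eq D_def G_def Gs_def z_def by simp
qed


end
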